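(* Let $\lambda>0$, let $G=(V,W)$ be a weighted graph with $N$ vertices, let $R\ge 1$, and let $C\subset\mathbb{M}_{N\times R}(\mathbb{R})$ be a nonempty closed convex set. Let $F^k=[f^k_1,\dots,f^k_R]\in C$, and assume $B^k_r:=B(f^k_r)\neq 0$ for all $r$. Set $E^k_r=T(f^k_r)/B^k_r$, let $\Delta^k>0$, and define $c^k_r=\Delta^k/B^k_r$, $d^k_r=\Delta^k E^k_r/B^k_r$, and the convex functions on $\mathbb{M}_{N\times R}(\mathbb{R})$ $$\mathcal{T}^k(F)=\sum_{r=1}^R c^k_r\,T(f_r),\qquad \mathcal{B}^k(F)=\sum_{r=1}^R d^k_r\,B(f_r),\qquad F=[f_1,\dots,f_R].$$ Let $V^k\in\partial\mathcal{B}^k(F^k)$ and define $$F^{k+1}=\operatorname*{argmin}_{F\in C}\ \mathcal{T}^k(F)+\tfrac12\|F-(F^k+V^k)\|_F^2 .$$ Then $F^{k+1}\in C$, and if moreover $B^{k+1}_r:=B(f^{k+1}_r)\neq0$ for all $r$ (so that $E^{k+1}_r:=T(f^{k+1}_r)/B^{k+1}_r$ is defined), then $$\sum_{r=1}^R\frac{B^{k+1}_r}{B^k_r}\bigl(E^k_r-E^{k+1}_r\bigr)\ \ge\ \frac{\|F^k-F^{k+1}\|_F^2}{\Delta^k}.$$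
   Context: The graph $G=(V,W)$ has vertex set $V=\{\mathbf{x}_1,\dots,\mathbf{x}_N\}$ and symmetric matrix $W=(w_{ij})$ with $w_{ij}\ge0$; functions on $V$ are identified with vectors in $\mathbb{R}^N$, $\mathbf{1}$ is the all-ones vector, and $\|\cdot\|_F$ is the Frobenius norm, with $\langle\cdot,\cdot\rangle$ the Frobenius inner product. - $T(f)=\|f\|_{TV}=\sum_{i=1}^N\sum_{j=1}^N w_{ij}|f(\mathbf{x}_i)-f(\mathbf{x}_j)|$. - $B(f)=\|f-\mathrm{med}_\lambda(f)\mathbf{1}\|_{1,\lambda}$, where $\|h\|_{1,\lambda}=\sum_i|h_i|_\lambda$ with $|t|_\lambda=\lambda t$ for $t\ge0$ and $|t|_\lambda=-t$ for $t<0$, and $\mathrm{med}_\lambda(f)$ is the $(k+1)$-st largest entry of $f$ counted with multiplicity, $k=\lfloor N/(\lambda+1)\rfloor$. - $T$ and $B$ are convex and nonnegative, so $c^k_r,d^k_r\ge0$ and $\mathcal{T}^k,\mathcal{B}^k$ are convex; $\partial$ denotes the convex subdifferential. The minimizer defining $F^{k+1}$ exists and is unique by strong convexity (it is the proximal operator of $\mathcal{T}^k+\delta_C$ applied to $F^k+V^k$, where $\delta_C$ is $0$ on $C$ and $+\infty$ off $C$). - In the paper, $C$ is either the simplex set $\Sigma=\{F\in\mathbb{M}_{N\times R}([0,1]): \sum_{r}f_r(\mathbf{x}_i)=1\ \forall i\}$ or its intersection with a label constraint set, but the result only uses that $C$ is nonempty, closed and convex. *)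

theory Defs
  imports "HOL-Analysis.Analysis" "HOL-Library.Multiset"
begin

text \<open>Vertices are indexed by a finite type 'n (N = CARD('n)); labels by a finite
type 'r (R = CARD('r) \<ge> 1). A function on V is a vector real^'n; an N x R matrix is
real^'r^'n, whose norm is the Frobenius norm and whose inner product is the
Frobenius inner product.\<close>

definition column :: "real^'r^'n \<Rightarrow> 'r \<Rightarrow> real^'n" where
  "column F r = (\<chi> i. F $ i $ r)"

definition TV :: "real^'n^'n \<Rightarrow> real^'n \<Rightarrow> real" where
  "TV W f = (\<Sum>i\<in>UNIV. \<Sum>j\<in>UNIV. W $ i $ j * \<bar>f $ i - f $ j\<bar>)"

definition abs_lam :: "real \<Rightarrow> real \<Rightarrow> real" where
  "abs_lam lam t = (if t \<ge> 0 then lam * t else - t)"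

text \<open>(k+1)-st largest entry counted with multiplicity, k = floor(N/(lam+1)).\<close>
definition med_lam :: "real \<Rightarrow> real^'n \<Rightarrow> real" where
  "med_lam lam f =
     rev (sorted_list_of_multiset (image_mset (\<lambda>i. f $ i) (mset_set (UNIV :: 'n set))))
       ! nat \<lfloor>real CARD('n) / (lam + 1)\<rfloor>"

definition Bal :: "real \<Rightarrow> real^'n \<Rightarrow> real" where
  "Bal lam f = (\<Sum>i\<in>UNIV. abs_lam lam (f $ i - med_lam lam f))"

definition subdiff :: "('a::real_inner \<Rightarrow> real) \<Rightarrow> 'a \<Rightarrow> 'a set" where
  "subdiff g x = {v. \<forall>y. g y \<ge> g x + inner v (y - x)}"

end

theory Submission
  imports Defs
begin


lemma exists_min:
  fixes Phi :: "'a::euclidean_space \<Rightarrow> real"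
  assumes C: "closed C" and a: "a \<in> C" and cont: "continuous_on UNIV Phi"
    and lb: "\<And>y. Phi y \<ge> (1/2) * (norm (y - p))\<^sup>2"
  shows "\<exists>x\<in>C. \<forall>y\<in>C. Phi x \<le> Phi y"
proof -
  define \<rho> where "\<rho> = sqrt (2 * Phi a)"
  have Pa: "Phi a \<ge> 0" using lb[of a] zero_le_power2[of "norm (a - p)"] by linarith
  have "(norm (a - p))\<^sup>2 \<le> 2 * Phi a" using lb[of a] by simp
  hence "norm (a - p) \<le> \<rho>" unfolding \<rho>_def using real_le_rsqrt by blast
  hence aS: "a \<in> C \<inter> cball p \<rho>" using a by (simp add: dist_norm norm_minus_commute)
  have "compact (C \<inter> cball p \<rho>)" using C by (simp add: closed_Int_compact)
  moreover have "continuous_on (C \<inter> cball p \<rho>) Phi" using cont continuous_on_subset by blast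
  ultimately obtain x where xS: "x \<in> C \<inter> cball p \<rho>" and xm: "\<forall>y\<in>C \<inter> cball p \<rho>. Phi x \<le> Phi y"
    using continuous_attains_inf aS by blast
  show ?thesis
  proof (intro bexI ballI)
    fix y assume yC: "y \<in> C"
    show "Phi x \<le> Phi y"
    proof (cases "y \<in> cball p \<rho>")
      case True thus ?thesis using xm yC by blast
    next
      case False
      hence "norm (y - p) > \<rho>" by (simp add: dist_norm norm_minus_commute)
      moreover have "\<rho> \<ge> 0" unfolding \<rho>_def using Pa by simp
      ultimately have "(norm (y - p))\<^sup>2 > \<rho>\<^sup>2" by (simp add: power_strict_mono)
      also have "\<rho>\<^sup>2 = 2 * Phi a" unfolding \<rho>_def using Pa by simp
      finally have "Phi y > Phi a" using lb[of y] by simp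
      moreover have "Phi x \<le> Phi a" using xm aS by blast
      ultimately show ?thesis by simp
    qed
  qed (use xS in auto)
qed

lemma variational:
  fixes g :: "'a::real_inner \<Rightarrow> real"
  assumes conv: "convex C"
    and gconv: "\<And>a b t. 0 \<le> t \<Longrightarrow> t \<le> 1 \<Longrightarrow> g ((1 - t) *\<^sub>R a + t *\<^sub>R b) \<le> (1 - t) * g a + t * g b"
    and xC: "x \<in> C"
    and xmin: "\<And>y. y \<in> C \<Longrightarrow> g x + (1/2) * (norm (x - p))\<^sup>2 \<le> g y + (1/2) * (norm (y - p))\<^sup>2"
    and GC: "G \<in> C"
  shows "g G - g x + inner (x - p) (G - x) \<ge> 0"
proof (rule ccontr)
  define X where "X = g G - g x + inner (x - p) (G - x)"
  define d where "d = G - x"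
  assume "\<not> ?thesis"
  hence Xn: "X < 0" unfolding X_def by simp
  define t where "t = min 1 (- X / ((norm d)\<^sup>2 + 1))"
  have t0: "t > 0" proof -
    have "(norm d)\<^sup>2 + 1 > 0" by (smt (verit) zero_le_power2)
    hence "X / ((norm d)\<^sup>2 + 1) < 0" using Xn divide_neg_pos by blast
    hence "- X / ((norm d)\<^sup>2 + 1) > 0" by simp
    thus ?thesis unfolding t_def by simp
  qed
  have t1: "t \<le> 1" unfolding t_def by simp
  have eq: "(1 - t) *\<^sub>R x + t *\<^sub>R G = x + t *\<^sub>R d" unfolding d_def by (simp add: algebra_simps)
  have inC: "x + t *\<^sub>R d \<in> C" using conv xC GC t0 t1 eq
    by (metis convexD less_eq_real_def diff_ge_0_iff_ge add_diff_cancel_left' diff_add_cancel)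
  have sq: "(norm (x + t *\<^sub>R d - p))\<^sup>2 = (norm (x - p))\<^sup>2 + 2 * t * inner (x - p) d + t\<^sup>2 * (norm d)\<^sup>2"
  proof -
    have "x + t *\<^sub>R d - p = (x - p) + t *\<^sub>R d" by simp
    thus ?thesis by (simp only: power2_norm_eq_inner inner_add_left inner_add_right inner_scaleR_left inner_scaleR_right inner_commute[of d "x - p"]) (simp add: power2_eq_square algebra_simps)
  qed
  have "g x + (1/2) * (norm (x - p))\<^sup>2 \<le> g (x + t *\<^sub>R d) + (1/2) * (norm (x + t *\<^sub>R d - p))\<^sup>2"
    using xmin[OF inC] .
  also have "g (x + t *\<^sub>R d) \<le> (1 - t) * g x + t * g G" using gconv[OF _ t1, of x G] t0 eq by simp
  finally have "0 \<le> t * (g G - g x) + t * inner (x - p) d + t\<^sup>2 / 2 * (norm d)\<^sup>2"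
    using sq by (simp add: algebra_simps)
  hence "0 \<le> t * (X + t / 2 * (norm d)\<^sup>2)" unfolding X_def d_def by (simp add: algebra_simps power2_eq_square)
  hence h: "0 \<le> X + t / 2 * (norm d)\<^sup>2" using t0 by (simp add: zero_le_mult_iff)
  have "t * (norm d)\<^sup>2 \<le> (- X / ((norm d)\<^sup>2 + 1)) * (norm d)\<^sup>2"
    unfolding t_def by (intro mult_right_mono) auto
  also have "\<dots> = (- X) * ((norm d)\<^sup>2 / ((norm d)\<^sup>2 + 1))" by simp
  also have "\<dots> \<le> (- X) * 1"
  proof (rule mult_left_mono)
    have "(norm d)\<^sup>2 + 1 > 0" by (smt (verit) zero_le_power2)
    thus "(norm d)\<^sup>2 / ((norm d)\<^sup>2 + 1) \<le> 1" by (simp add: divide_le_eq_1)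
  qed (use Xn in simp)
  also have "\<dots> = - X" by simp
  finally show False using h Xn by simp
qed



lemma column_add: "column (A + B) r = column A r + column B r"
  by (simp add: column_def vec_eq_iff)
lemma column_scale: "column (t *\<^sub>R A) r = t *\<^sub>R column A r"
  by (simp add: column_def vec_eq_iff)
lemma column_diff: "column (A - B) r = column A r - column B r"
  by (simp add: column_def vec_eq_iff)

lemma TV_nonneg: "\<forall>i j. W $ i $ j \<ge> 0 \<Longrightarrow> TV W f \<ge> 0"
  unfolding TV_def by (intro sum_nonneg) auto

lemma TV_convex:
  assumes "\<forall>i j. W $ i $ j \<ge> (0::real)" "0 \<le> t" "t \<le> 1"
  shows "TV W ((1 - t) *\<^sub>R f + t *\<^sub>R g) \<le> (1 - t) * TV W f + t * TV W g"
proof -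
  have "TV W ((1 - t) *\<^sub>R f + t *\<^sub>R g) \<le>
     (\<Sum>i\<in>UNIV. \<Sum>j\<in>UNIV. (1 - t) * (W $ i $ j * \<bar>f $ i - f $ j\<bar>) + t * (W $ i $ j * \<bar>g $ i - g $ j\<bar>))"
    unfolding TV_def
  proof (intro sum_mono)
    fix i j
    have "\<bar>((1 - t) *\<^sub>R f + t *\<^sub>R g) $ i - ((1 - t) *\<^sub>R f + t *\<^sub>R g) $ j\<bar>
        = \<bar>(1 - t) * (f $ i - f $ j) + t * (g $ i - g $ j)\<bar>" by (simp add: algebra_simps)
    also have "\<dots> \<le> (1 - t) * \<bar>f $ i - f $ j\<bar> + t * \<bar>g $ i - g $ j\<bar>"
      proof -
      have "\<bar>(1 - t) * (f $ i - f $ j) + t * (g $ i - g $ j)\<bar> \<le> \<bar>(1 - t) * (f $ i - f $ j)\<bar> + \<bar>t * (g $ i - g $ j)\<bar>"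
        by (rule abs_triangle_ineq)
      also have "\<dots> = (1 - t) * \<bar>f $ i - f $ j\<bar> + t * \<bar>g $ i - g $ j\<bar>"
        using assms(2,3) by (simp add: abs_mult)
      finally show ?thesis .
    qed
    finally have le: "\<bar>((1 - t) *\<^sub>R f + t *\<^sub>R g) $ i - ((1 - t) *\<^sub>R f + t *\<^sub>R g) $ j\<bar> \<le> (1 - t) * \<bar>f $ i - f $ j\<bar> + t * \<bar>g $ i - g $ j\<bar>" .
    show "W $ i $ j * \<bar>((1 - t) *\<^sub>R f + t *\<^sub>R g) $ i - ((1 - t) *\<^sub>R f + t *\<^sub>R g) $ j\<bar>
       \<le> (1 - t) * (W $ i $ j * \<bar>f $ i - f $ j\<bar>) + t * (W $ i $ j * \<bar>g $ i - g $ j\<bar>)"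
      using assms(1) mult_left_mono[OF le, of "W $ i $ j"] by (simp add: distrib_left mult.left_commute)
  qed
  also have "\<dots> = (1 - t) * TV W f + t * TV W g"
    unfolding TV_def by (simp add: sum.distrib sum_distrib_left)
  finally show ?thesis .
qed

lemma Bal_nonneg: "lam > 0 \<Longrightarrow> Bal lam f \<ge> 0"
  unfolding Bal_def abs_lam_def by (intro sum_nonneg) auto

lemma TV_cont: "continuous_on UNIV (\<lambda>F::real^'r^'n. TV W (column F r))"
  unfolding TV_def column_def by (simp, intro continuous_intros)



theorem theorem3:
  fixes lam :: real and W :: "real^'n^'n" and C :: "(real^'r^'n) set"
    and Fk Vk :: "real^'r^'n" and Delta :: real
  assumes lam_pos: "lam > 0"
    and W_sym: "\<forall>i j. W $ i $ j = W $ j $ i"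
    and W_nonneg: "\<forall>i j. W $ i $ j \<ge> 0"
    and C_ne: "C \<noteq> {}" and C_closed: "closed C" and C_convex: "convex C"
    and Fk_in: "Fk \<in> C"
    and Bk_nz: "\<forall>r. Bal lam (column Fk r) \<noteq> 0"
    and Delta_pos: "Delta > 0"
    and Vk_sub: "Vk \<in> subdiff
        (\<lambda>F. \<Sum>r\<in>UNIV. (Delta * (TV W (column Fk r) / Bal lam (column Fk r))
                             / Bal lam (column Fk r)) * Bal lam (column F r)) Fk"
  shows "let Fk1 = arg_min_on
               (\<lambda>F. (\<Sum>r\<in>UNIV. (Delta / Bal lam (column Fk r)) * TV W (column F r))
                     + (1/2) * (norm (F - (Fk + Vk)))\<^sup>2) C
         in Fk1 \<in> C \<and>
            ((\<forall>r. Bal lam (column Fk1 r) \<noteq> 0) \<longrightarrow>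
              (\<Sum>r\<in>UNIV. (Bal lam (column Fk1 r) / Bal lam (column Fk r)) *
                   (TV W (column Fk r) / Bal lam (column Fk r)
                    - TV W (column Fk1 r) / Bal lam (column Fk1 r)))
              \<ge> (norm (Fk - Fk1))\<^sup>2 / Delta)"
  proof -
  define B where "B r = Bal lam (column Fk r)" for r
  define c where "c r = Delta / B r" for r
  define e where "e r = Delta * (TV W (column Fk r) / B r) / B r" for r
  define TT where "TT F = (\<Sum>r\<in>UNIV. c r * TV W (column F r))" for F :: "real^'r^'n"
  define BB where "BB F = (\<Sum>r\<in>UNIV. e r * Bal lam (column F r))" for F :: "real^'r^'n"
  define p where "p = Fk + Vk"
  define Phi where "Phi F = TT F + (1/2) * (norm (F - p))\<^sup>2" for F
  have Bpos: "B r > 0" for r using Bk_nz Bal_nonneg[OF lam_pos] unfolding B_def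
    by (metis less_eq_real_def)
  have cnn: "c r \<ge> 0" for r unfolding c_def using Bpos[of r] Delta_pos by simp
  have Phi_eq: "(\<lambda>F. (\<Sum>r\<in>UNIV. (Delta / Bal lam (column Fk r)) * TV W (column F r))
                     + (1/2) * (norm (F - (Fk + Vk)))\<^sup>2) = Phi"
    unfolding Phi_def TT_def c_def B_def p_def by simp
  have TTnn: "TT F \<ge> 0" for F unfolding TT_def
    using cnn TV_nonneg[OF W_nonneg] by (intro sum_nonneg) simp
  have cont: "continuous_on UNIV Phi"
    unfolding Phi_def TT_def
    by (intro continuous_intros TV_cont)
  have "\<exists>x\<in>C. \<forall>y\<in>C. Phi x \<le> Phi y"
    by (rule exists_min[OF C_closed Fk_in cont, of p]) (use TTnn in \<open>simp add: Phi_def\<close>)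
  then obtain x0 where "x0 \<in> C" "\<forall>y\<in>C. Phi x0 \<le> Phi y" by blast
  define Fk1 where "Fk1 = arg_min_on Phi C"
  have F1C: "Fk1 \<in> C" and F1min: "\<And>y. y \<in> C \<Longrightarrow> Phi Fk1 \<le> Phi y"
  proof -
    have "Fk1 \<in> C \<and> (\<forall>y\<in>C. Phi Fk1 \<le> Phi y)"
      unfolding Fk1_def arg_min_on_def
      by (rule arg_minI[where x = x0]) (use \<open>x0 \<in> C\<close> \<open>\<forall>y\<in>C. Phi x0 \<le> Phi y\<close> in \<open>auto simp: not_less\<close>)
    thus "Fk1 \<in> C" "\<And>y. y \<in> C \<Longrightarrow> Phi Fk1 \<le> Phi y" by auto
  qed
  have TTconv: "TT ((1 - t) *\<^sub>R a + t *\<^sub>R b) \<le> (1 - t) * TT a + t * TT b" if "0 \<le> t" "t \<le> 1" for a b t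
  proof -
    have "TT ((1 - t) *\<^sub>R a + t *\<^sub>R b) \<le> (\<Sum>r\<in>UNIV. c r * ((1 - t) * TV W (column a r) + t * TV W (column b r)))"
      unfolding TT_def column_add column_scale
      by (intro sum_mono mult_left_mono TV_convex[OF W_nonneg that] cnn)
    also have "\<dots> = (1 - t) * TT a + t * TT b"
      unfolding TT_def by (simp add: sum.distrib sum_distrib_left algebra_simps sum_subtractf)
    finally show ?thesis .
  qed
  have var: "TT Fk - TT Fk1 + inner (Fk1 - p) (Fk - Fk1) \<ge> 0"
    by (rule variational[OF C_convex TTconv F1C _ Fk_in]) (use F1min in \<open>auto simp: Phi_def\<close>)
  have sub: "BB Fk1 \<ge> BB Fk + inner Vk (Fk1 - Fk)"
    using Vk_sub unfolding subdiff_def BB_def e_def B_def by blast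
  have key: "TT Fk - TT Fk1 + BB Fk1 - BB Fk \<ge> (norm (Fk - Fk1))\<^sup>2"
  proof -
    have "inner (Fk1 - p) (Fk - Fk1) = - (norm (Fk - Fk1))\<^sup>2 - inner Vk (Fk - Fk1)"
      unfolding p_def power2_norm_eq_inner by (simp add: algebra_simps inner_diff_left inner_diff_right inner_commute)
    moreover have "inner Vk (Fk1 - Fk) = - inner Vk (Fk - Fk1)"
      by (simp add: inner_diff_right)
    ultimately show ?thesis using var sub by linarith
  qed
  have TTk: "TT Fk = BB Fk"
    unfolding TT_def BB_def c_def e_def using Bpos by (intro sum.cong) (auto simp: field_simps B_def[symmetric])
  show ?thesis
    unfolding Let_def Phi_eq Fk1_def[symmetric]
  proof (intro conjI impI F1C)
    assume nz: "\<forall>r. Bal lam (column Fk1 r) \<noteq> 0"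
    have "Delta * (\<Sum>r\<in>UNIV. (Bal lam (column Fk1 r) / Bal lam (column Fk r)) *
                   (TV W (column Fk r) / Bal lam (column Fk r)
                    - TV W (column Fk1 r) / Bal lam (column Fk1 r))) = BB Fk1 - TT Fk1"
      unfolding BB_def TT_def c_def e_def sum_distrib_left sum_subtractf[symmetric] B_def
      using nz Bk_nz by (intro sum.cong) (auto simp: field_simps)
    also have "\<dots> \<ge> (norm (Fk - Fk1))\<^sup>2" using key TTk by linarith
    finally show "(norm (Fk - Fk1))\<^sup>2 / Delta \<le> (\<Sum>r\<in>UNIV. (Bal lam (column Fk1 r) / Bal lam (column Fk r)) *
                   (TV W (column Fk r) / Bal lam (column Fk r)
                    - TV W (column Fk1 r) / Bal lam (column Fk1 r)))"
      using Delta_pos by (simp add: divide_le_eq mult.commute)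
  qed
qed

end
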